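(* Let $D$ and $Y$ be random variables with finite supports $\mathcal{D}$ and $\mathcal{Y}$ and joint distribution $p_{D,Y}$. Define $P_c(D|Y)=\sum_{y\in\mathcal{Y}}p_Y(y)\max_{d\in\mathcal{D}}p_{D|Y}(d|y)$ (the maximum probability of correctly guessing $D$ from $Y$ over all estimators $\hat D$ with $D\to Y\to\hat D$), $p_D^*=\max_{d\in\mathcal{D}}p_D(d)$, and $\mathsf{Adv}(D|Y)=P_c(D|Y)/p_D^*$. Let $\epsilon\ge 0$. If $\mathsf{Adv}(D|Y)>1+\epsilon$, then for any probability distribution $p_{Y_T}$ on $\mathcal{Y}$ there exist $y\in\mathcal{Y}$ and $d\in\mathcal{D}$ such that \[ \left|\frac{p_{Y|D}(y|d)}{p_{Y_T}(y)}-1\right|>\epsilon. \] *)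

theory Defs
  imports "HOL-Probability.Probability"
begin

definition suppD :: "('d \<times> 'y) pmf \<Rightarrow> 'd set" where
  "suppD J = set_pmf (map_pmf fst J)"

definition suppY :: "('d \<times> 'y) pmf \<Rightarrow> 'y set" where
  "suppY J = set_pmf (map_pmf snd J)"

definition pD :: "('d \<times> 'y) pmf \<Rightarrow> 'd \<Rightarrow> real" where
  "pD J d = pmf (map_pmf fst J) d"

definition pY :: "('d \<times> 'y) pmf \<Rightarrow> 'y \<Rightarrow> real" where
  "pY J y = pmf (map_pmf snd J) y"

definition pD_given_Y :: "('d \<times> 'y) pmf \<Rightarrow> 'd \<Rightarrow> 'y \<Rightarrow> real" where
  "pD_given_Y J d y = pmf J (d, y) / pY J y"

definition pY_given_D :: "('d \<times> 'y) pmf \<Rightarrow> 'y \<Rightarrow> 'd \<Rightarrow> real" where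
  "pY_given_D J y d = pmf J (d, y) / pD J d"

definition Pc :: "('d \<times> 'y) pmf \<Rightarrow> real" where
  "Pc J = (\<Sum>y\<in>suppY J. pY J y * Max ((\<lambda>d. pD_given_Y J d y) ` suppD J))"

definition pD_star :: "('d \<times> 'y) pmf \<Rightarrow> real" where
  "pD_star J = Max (pD J ` suppD J)"

definition Adv :: "('d \<times> 'y) pmf \<Rightarrow> real" where
  "Adv J = Pc J / pD_star J"

end

theory Submission
  imports Defs
begin

theorem proposition2:
  fixes J :: "('d \<times> 'y) pmf" and q :: "'y pmf" and \<epsilon> :: real
  assumes "finite (suppD J)" and "finite (suppY J)"
    and "\<epsilon> \<ge> 0"
    and "Adv J > 1 + \<epsilon>"
    and "set_pmf q \<subseteq> suppY J"
  shows "\<exists>y\<in>suppY J. \<exists>d\<in>suppD J.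
           (pmf q y = 0 \<and> pY_given_D J y d > 0) \<or>
           (pmf q y > 0 \<and> \<bar>pY_given_D J y d / pmf q y - 1\<bar> > \<epsilon>)"
proof (rule ccontr)
  assume neg: "\<not> ?thesis"
  define ps where "ps = pD_star J"
  have ne: "suppD J \<noteq> {}" unfolding suppD_def by (rule set_pmf_not_empty)
  have pDpos: "pD J d > 0" if "d \<in> suppD J" for d
    using that unfolding pD_def suppD_def by (rule pmf_positive)
  have pYpos: "pY J y > 0" if "y \<in> suppY J" for y
    using that unfolding pY_def suppY_def by (rule pmf_positive)
  have pDle: "pD J d \<le> ps" if "d \<in> suppD J" for d
    unfolding ps_def pD_star_def using that assms(1) by (intro Max_ge) auto
  have pspos: "ps > 0"
  proof -
    obtain d where "d \<in> suppD J" using ne by blast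
    thus ?thesis using pDpos pDle by (meson less_le_trans)
  qed
  have key: "pmf J (d, y) \<le> (1 + \<epsilon>) * pmf q y * ps"
    if y: "y \<in> suppY J" and d: "d \<in> suppD J" for y d
  proof -
    have n: "\<not> ((pmf q y = 0 \<and> pY_given_D J y d > 0) \<or>
           (pmf q y > 0 \<and> \<bar>pY_given_D J y d / pmf q y - 1\<bar> > \<epsilon>))"
      using neg y d by blast
    have pd: "pD J d > 0" using pDpos d by blast
    have x: "pY_given_D J y d = pmf J (d,y) / pD J d" unfolding pY_given_D_def by simp
    have A: "pmf J (d, y) \<le> (1 + \<epsilon>) * pmf q y * pD J d"
    proof (cases "pmf q y = 0")
      case True
      then have "pY_given_D J y d \<le> 0" using n by auto
      then have "pmf J (d,y) \<le> 0" using x pd by (simp add: divide_le_0_iff)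
      thus ?thesis using True by simp
    next
      case False
      then have qp: "pmf q y > 0" using pmf_nonneg[of q y] by linarith
      then have "\<bar>pY_given_D J y d / pmf q y - 1\<bar> \<le> \<epsilon>" using n by auto
      then have "pY_given_D J y d / pmf q y \<le> 1 + \<epsilon>" by linarith
      then have "pY_given_D J y d \<le> (1 + \<epsilon>) * pmf q y" using qp by (simp add: divide_le_eq)
      then have "pmf J (d,y) / pD J d \<le> (1 + \<epsilon>) * pmf q y" using x by simp
      thus ?thesis using pd by (simp add: divide_le_eq mult.commute mult.left_commute)
    qed
    also have "\<dots> \<le> (1 + \<epsilon>) * pmf q y * ps"
      using pDle[OF d] assms(3) by (intro mult_left_mono) auto
    finally show ?thesis .
  qed
  have term_le: "pY J y * Max ((\<lambda>d. pD_given_Y J d y) ` suppD J) \<le> (1 + \<epsilon>) * pmf q y * ps"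
    if y: "y \<in> suppY J" for y
  proof -
    have py: "pY J y > 0" using pYpos y by blast
    have "Max ((\<lambda>d. pD_given_Y J d y) ` suppD J) \<le> (1 + \<epsilon>) * pmf q y * ps / pY J y"
    proof (subst Max_le_iff)
      show "finite ((\<lambda>d. pD_given_Y J d y) ` suppD J)" using assms(1) by simp
      show "(\<lambda>d. pD_given_Y J d y) ` suppD J \<noteq> {}" using ne by simp
      show "\<forall>a\<in>(\<lambda>d. pD_given_Y J d y) ` suppD J. a \<le> (1 + \<epsilon>) * pmf q y * ps / pY J y"
        using key[OF y] py unfolding pD_given_Y_def by (auto intro: divide_right_mono)
    qed
    then show ?thesis using py by (simp add: le_divide_eq mult.commute)
  qed
  have "Pc J \<le> (\<Sum>y\<in>suppY J. (1 + \<epsilon>) * pmf q y * ps)"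
    unfolding Pc_def by (intro sum_mono term_le)
  also have "\<dots> = (1 + \<epsilon>) * ps * (\<Sum>y\<in>suppY J. pmf q y)"
    by (simp add: sum_distrib_left mult.commute mult.left_commute)
  also have "(\<Sum>y\<in>suppY J. pmf q y) = 1" using sum_pmf_eq_1[OF assms(2) assms(5)] .
  finally have "Pc J \<le> (1 + \<epsilon>) * ps" by simp
  moreover have "Pc J / ps > 1 + \<epsilon>" using assms(4) unfolding Adv_def ps_def by simp
  ultimately show False using pspos by (simp add: less_divide_eq)
qed

end
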